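(* Assume $g$ satisfies (Hg), and let $a\in(0,1)$ and $k>0$. Define $$d^-(a):=\max_{y\in(a,1)}\frac{g(y;a)}{y},\qquad d^+(a,k):=\max_{y\in(1-a,1)}\frac{-g(1-y;a)}{ky}.$$ Then: (i) for every $d\in(0,d^+(a,k))$ we have $c(a,d,k)\ge 0$; (ii) for every $d\in(0,d^-(a))$ we have $c(a,d,k)\le 0$. In particular, if $0<d<\min\{d^-(a),d^+(a,k)\}$, then $c(a,d,k)=0$.
   Context: A function $g:\mathbb R\times[0,1]\to\mathbb R$, $(u,a)\mapsto g(u;a)$, satisfies (Hg) if it is $C^1$ and for every $a\in(0,1)$: $g(0;a)=g(a;a)=g(1;a)=0$, $g'(0;a)<0$, $g'(1;a)<0$, $g'(a;a)>0$ (where $g'=\partial_u g$), $g(v;a)>0$ for $v\in(-\infty,0)\cup(a,1)$ and $g(v;a)<0$ for $v\in(0,a)\cup(1,\infty)$. For $k>0$, $a\in(0,1)$, $d>0$ consider the traveling wave problem: find $c\in\mathbb R$ and $\Phi:\mathbb R\to\mathbb R$ with $$-c\Phi'(\xi)=d\big(k\Phi(\xi+1)-(k+1)\Phi(\xi)+\Phi(\xi-1)\big)+g(\Phi(\xi);a)\quad(\xi\in\mathbb R),\qquad \lim_{\xi\to-\infty}\Phi(\xi)=0,\ \lim_{\xi\to+\infty}\Phi(\xi)=1.$$ It is known (Mallet-Paret) that under (Hg) this problem has a solution with $\Phi$ non-decreasing and that the speed $c$ is uniquely determined; it is denoted $c(a,d,k)$. *)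

theory Defs
  imports "HOL-Analysis.Analysis"
begin

definition C1_on_strip :: "(real \<Rightarrow> real \<Rightarrow> real) \<Rightarrow> bool" where
  "C1_on_strip g \<longleftrightarrow> (\<exists>gu ga :: real \<times> real \<Rightarrow> real.
     continuous_on (UNIV \<times> {0..1}) gu \<and> continuous_on (UNIV \<times> {0..1}) ga \<and>
     (\<forall>p \<in> UNIV \<times> {0..1}.
        ((\<lambda>q. g (fst q) (snd q)) has_derivative
           (\<lambda>h. gu p * fst h + ga p * snd h)) (at p within UNIV \<times> {0..1})))"

definition Hg :: "(real \<Rightarrow> real \<Rightarrow> real) \<Rightarrow> bool" where
  "Hg g \<longleftrightarrow> C1_on_strip g \<and>
     (\<forall>a. 0 < a \<and> a < 1 \<longrightarrow>
        g 0 a = 0 \<and> g a a = 0 \<and> g 1 a = 0 \<and>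
        deriv (\<lambda>u. g u a) 0 < 0 \<and> deriv (\<lambda>u. g u a) 1 < 0 \<and> deriv (\<lambda>u. g u a) a > 0 \<and>
        (\<forall>v. (v < 0 \<or> (a < v \<and> v < 1)) \<longrightarrow> g v a > 0) \<and>
        (\<forall>v. ((0 < v \<and> v < a) \<or> 1 < v) \<longrightarrow> g v a < 0))"

definition tw_rhs :: "(real \<Rightarrow> real \<Rightarrow> real) \<Rightarrow> real \<Rightarrow> real \<Rightarrow> real \<Rightarrow> (real \<Rightarrow> real) \<Rightarrow> real \<Rightarrow> real" where
  "tw_rhs g a d k \<Phi> \<xi> = d * (k * \<Phi> (\<xi> + 1) - (k + 1) * \<Phi> \<xi> + \<Phi> (\<xi> - 1)) + g (\<Phi> \<xi>) a"

text \<open>(c, Phi) solves the traveling wave problem. For c = 0 the equation contains no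
  derivative (Phi need not be differentiable); for c \<noteq> 0 Phi is differentiable and
  -c Phi' = rhs pointwise.\<close>
definition tw_solution :: "(real \<Rightarrow> real \<Rightarrow> real) \<Rightarrow> real \<Rightarrow> real \<Rightarrow> real \<Rightarrow> real \<Rightarrow> (real \<Rightarrow> real) \<Rightarrow> bool" where
  "tw_solution g a d k c \<Phi> \<longleftrightarrow>
     (\<forall>\<xi>. if c = 0 then tw_rhs g a d k \<Phi> \<xi> = 0
           else (\<exists>D. (\<Phi> has_real_derivative D) (at \<xi>) \<and> - c * D = tw_rhs g a d k \<Phi> \<xi>)) \<and>
     (\<Phi> \<longlongrightarrow> 0) at_bot \<and> (\<Phi> \<longlongrightarrow> 1) at_top"

definition d_minus :: "(real \<Rightarrow> real \<Rightarrow> real) \<Rightarrow> real \<Rightarrow> real" where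
  "d_minus g a = (SUP y \<in> {a<..<1}. g y a / y)"

definition d_plus :: "(real \<Rightarrow> real \<Rightarrow> real) \<Rightarrow> real \<Rightarrow> real \<Rightarrow> real" where
  "d_plus g a k = (SUP y \<in> {1-a<..<1}. - g (1 - y) a / (k * y))"

end

theory Submission
  imports Defs
begin

lemma g_cont:
  assumes "C1_on_strip g" "0 \<le> a" "a \<le> 1"
  shows "continuous_on UNIV (\<lambda>u. g u a)"
proof -
  let ?G = "\<lambda>q. g (fst q) (snd q)"
  from assms(1) obtain gu ga :: "real \<times> real \<Rightarrow> real" where
    D: "\<forall>p \<in> UNIV \<times> {0..1}. (?G has_derivative (\<lambda>h. gu p * fst h + ga p * snd h)) (at p within UNIV \<times> {0..1})"
    unfolding C1_on_strip_def by blast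
  have "continuous_on (UNIV \<times> {0..1}) ?G"
    unfolding continuous_on_eq_continuous_within
    using D has_derivative_continuous by blast
  moreover have "continuous_on UNIV (\<lambda>u::real. (u, a))" by (intro continuous_intros)
  moreover have "(\<lambda>u::real. (u, a)) ` UNIV \<subseteq> UNIV \<times> {0..1}" using assms by auto
  ultimately have "continuous_on UNIV (\<lambda>u. ?G (u, a))" by (rule continuous_on_compose2)
  then show ?thesis by simp
qed

lemma g_bound:
  assumes "C1_on_strip g" "0 \<le> a" "a \<le> 1"
  shows "\<exists>B. \<forall>u\<in>{0..1}. \<bar>g u a\<bar> \<le> B"
proof -
  have "continuous_on {0..1} (\<lambda>u. g u a)"
    using g_cont[OF assms] continuous_on_subset by blast
  then have "compact ((\<lambda>u. g u a) ` {0..1::real})"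
    by (intro compact_continuous_image) auto
  then have "bounded ((\<lambda>u. g u a) ` {0..1::real})" by (rule compact_imp_bounded)
  then show ?thesis unfolding bounded_iff by auto
qed

lemma phi_range:
  fixes \<Phi> :: "real \<Rightarrow> real"
  assumes "mono \<Phi>" "(\<Phi> \<longlongrightarrow> 0) at_bot" "(\<Phi> \<longlongrightarrow> 1) at_top"
  shows "0 \<le> \<Phi> x \<and> \<Phi> x \<le> 1"
proof
  have "\<forall>\<^sub>F t in at_bot. \<Phi> t \<le> \<Phi> x"
    unfolding eventually_at_bot_linorder using assms(1) by (auto dest: monoD)
  then show "0 \<le> \<Phi> x" using tendsto_upperbound[OF assms(2)] by simp
  have "\<forall>\<^sub>F t in at_top. \<Phi> x \<le> \<Phi> t"
    unfolding eventually_at_top_linorder using assms(1) by (auto dest: monoD)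
  then show "\<Phi> x \<le> 1" using tendsto_lowerbound[OF assms(3)] by simp
qed

lemma phi_hit:
  fixes \<Phi> :: "real \<Rightarrow> real"
  assumes "mono \<Phi>" "(\<Phi> \<longlongrightarrow> 0) at_bot" "(\<Phi> \<longlongrightarrow> 1) at_top"
    and cont: "\<And>x. isCont \<Phi> x" and "0 < y" "y < 1"
  shows "\<exists>\<xi>. \<Phi> \<xi> = y"
proof -
  have "\<forall>\<^sub>F t in at_bot. \<Phi> t < y" using order_tendstoD(2)[OF assms(2)] assms(5) by blast
  then obtain x1 where x1: "\<Phi> x1 < y" by (auto simp: eventually_at_bot_linorder)
  have "\<forall>\<^sub>F t in at_top. y < \<Phi> t" using order_tendstoD(1)[OF assms(3)] assms(6) by blast
  then obtain x2 where x2: "y < \<Phi> x2" by (auto simp: eventually_at_top_linorder)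
  have "x1 \<le> x2"
  proof (rule ccontr)
    assume "\<not> x1 \<le> x2"
    then have "\<Phi> x2 \<le> \<Phi> x1" by (intro monoD[OF assms(1)]) simp
    then show False using x1 x2 by simp
  qed
  from IVT[of \<Phi> x1 y x2] x1 x2 this cont show ?thesis by force
qed

lemma deriv_nonneg:
  fixes \<Phi> :: "real \<Rightarrow> real"
  assumes "mono \<Phi>" "(\<Phi> has_real_derivative D) (at x)"
  shows "0 \<le> D"
proof (rule ccontr)
  assume "\<not> 0 \<le> D"
  then obtain e where e: "e > 0" "\<forall>h>0. h < e \<longrightarrow> \<Phi> (x + h) < \<Phi> x"
    using DERIV_neg_dec_right[OF assms(2)] by force
  then have "\<Phi> (x + e/2) < \<Phi> x" by simp
  moreover have "\<Phi> x \<le> \<Phi> (x + e/2)" using e(1) by (intro monoD[OF assms(1)]) simp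
  ultimately show False by simp
qed

theorem proposition2p3:
  fixes g :: "real \<Rightarrow> real \<Rightarrow> real" and a k :: real
  assumes "Hg g" and "0 < a" and "a < 1" and "0 < k"
  shows "(\<forall>d c \<Phi>. 0 < d \<and> d < d_plus g a k \<and> mono \<Phi> \<and> tw_solution g a d k c \<Phi> \<longrightarrow> c \<ge> 0)
       \<and> (\<forall>d c \<Phi>. 0 < d \<and> d < d_minus g a \<and> mono \<Phi> \<and> tw_solution g a d k c \<Phi> \<longrightarrow> c \<le> 0)
       \<and> (\<forall>d c \<Phi>. 0 < d \<and> d < min (d_minus g a) (d_plus g a k) \<and> mono \<Phi> \<and> tw_solution g a d k c \<Phi> \<longrightarrow> c = 0)"
proof -
  have C1: "C1_on_strip g" using assms(1) unfolding Hg_def by blast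
  obtain B where B: "\<forall>u\<in>{0..1}. \<bar>g u a\<bar> \<le> B" using g_bound[OF C1, of a] assms(2,3) by auto
  have common: "(\<forall>\<xi>. \<exists>D. (\<Phi> has_real_derivative D) (at \<xi>) \<and> 0 \<le> D \<and> - c * D = tw_rhs g a d k \<Phi> \<xi>)
      \<and> (\<forall>x. 0 \<le> \<Phi> x \<and> \<Phi> x \<le> 1) \<and> (\<forall>y. 0 < y \<and> y < 1 \<longrightarrow> (\<exists>\<xi>. \<Phi> \<xi> = y))"
    if "mono \<Phi>" "tw_solution g a d k c \<Phi>" "c \<noteq> 0" for \<Phi> :: "real \<Rightarrow> real" and d c
  proof -
    have lim: "(\<Phi> \<longlongrightarrow> 0) at_bot" "(\<Phi> \<longlongrightarrow> 1) at_top" using that(2) unfolding tw_solution_def by auto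
    have DD: "\<forall>\<xi>. \<exists>D. (\<Phi> has_real_derivative D) (at \<xi>) \<and> - c * D = tw_rhs g a d k \<Phi> \<xi>"
      using that(2,3) unfolding tw_solution_def by metis
    then have D1: "\<forall>\<xi>. \<exists>D. (\<Phi> has_real_derivative D) (at \<xi>) \<and> 0 \<le> D \<and> - c * D = tw_rhs g a d k \<Phi> \<xi>"
      using deriv_nonneg[OF that(1)] by blast
    have cont: "\<And>x. isCont \<Phi> x" using DD DERIV_isCont by blast
    show ?thesis using D1 phi_range[OF that(1) lim] phi_hit[OF that(1) lim cont] by blast
  qed
  have P1: "c \<ge> 0" if H: "0 < d" "d < d_plus g a k" "mono \<Phi>" "tw_solution g a d k c \<Phi>" for d c \<Phi>
  proof (rule ccontr)
    assume "\<not> c \<ge> 0"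
    then have cneg: "c < 0" by simp
    then have cnz: "c \<noteq> 0" by simp
    have bdd: "bdd_above ((\<lambda>y. - g (1 - y) a / (k * y)) ` {1-a<..<1})"
    proof (rule bdd_aboveI2)
      fix y assume y: "y \<in> {1-a<..<1}"
      have "1 - y \<in> {0..1}" using y assms(2,3) by auto
      then have "\<bar>g (1 - y) a\<bar> \<le> B" using B by blast
      then have "- g (1 - y) a \<le> \<bar>B\<bar>" by linarith
      moreover have "k * (1 - a) \<le> k * y" using y assms(4) by simp
      moreover have "0 < k * (1 - a)" using assms by simp
      ultimately have "- g (1 - y) a / (k * y) \<le> \<bar>B\<bar> / (k * (1 - a))"
        by (intro frac_le) auto
      then show "- g (1 - y) a / (k * y) \<le> \<bar>B\<bar> / (k * (1 - a))" .
    qed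
    have ne: "{1-a<..<1::real} \<noteq> {}" using assms by auto
    from H(2) obtain y where y: "y \<in> {1-a<..<1}" "d < - g (1 - y) a / (k * y)"
      unfolding d_plus_def using less_cSUP_iff[OF ne bdd] by blast
    have ky: "0 < k * y" using y assms by auto
    have gy: "g (1 - y) a < - d * k * y" using y(2) ky by (simp add: field_simps)
    obtain \<xi> where xi: "\<Phi> \<xi> = 1 - y" proof -
      have "0 < 1 - y" "1 - y < 1" using y(1) assms by auto
      then show ?thesis using conjunct2[OF conjunct2[OF common[OF H(3,4) cnz]]] that by blast
    qed
    obtain D where D: "0 \<le> D" "- c * D = tw_rhs g a d k \<Phi> \<xi>" using conjunct1[OF common[OF H(3,4) cnz]] cneg by auto
    have r: "0 \<le> \<Phi> (\<xi> - 1)" "\<Phi> (\<xi> + 1) \<le> 1" using conjunct1[OF conjunct2[OF common[OF H(3,4) cnz]]] cneg by auto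
    have m: "\<Phi> (\<xi> - 1) \<le> \<Phi> \<xi>" by (rule monoD[OF H(3)]) simp
    have "k * \<Phi> (\<xi> + 1) \<le> k * 1" using r(2) assms(4) by (intro mult_left_mono) auto
    then have "k * \<Phi> (\<xi> + 1) - (k + 1) * \<Phi> \<xi> + \<Phi> (\<xi> - 1) \<le> k * y"
    proof -
      have "(k + 1) * \<Phi> \<xi> = k + 1 - k * y - y" by (simp only: xi) (simp add: algebra_simps)
      then show ?thesis using m xi \<open>k * \<Phi> (\<xi> + 1) \<le> k * 1\<close> by linarith
    qed
    then have "d * (k * \<Phi> (\<xi> + 1) - (k + 1) * \<Phi> \<xi> + \<Phi> (\<xi> - 1)) \<le> d * (k * y)"
      using H(1) by (intro mult_left_mono) auto
    then have "tw_rhs g a d k \<Phi> \<xi> < 0" unfolding tw_rhs_def using gy xi by simp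
    moreover have "0 \<le> - c * D" using cneg D(1) by (simp add: mult_nonpos_nonneg)
    ultimately show False using D(2) by simp
  qed
  have P2: "c \<le> 0" if H: "0 < d" "d < d_minus g a" "mono \<Phi>" "tw_solution g a d k c \<Phi>" for d c \<Phi>
  proof (rule ccontr)
    assume "\<not> c \<le> 0"
    then have cpos: "c > 0" by simp
    then have cnz: "c \<noteq> 0" by simp
    have bdd: "bdd_above ((\<lambda>y. g y a / y) ` {a<..<1})"
    proof (rule bdd_aboveI2)
      fix y assume y: "y \<in> {a<..<1}"
      have "y \<in> {0..1}" using y assms(2,3) by auto
      then have "\<bar>g y a\<bar> \<le> B" using B by blast
      then have "g y a \<le> \<bar>B\<bar>" by linarith
      moreover have "a \<le> y" using y by simp
      ultimately show "g y a / y \<le> \<bar>B\<bar> / a"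
        using assms(2) by (intro frac_le) auto
    qed
    have ne: "{a<..<1::real} \<noteq> {}" using assms by auto
    from H(2) obtain y where y: "y \<in> {a<..<1}" "d < g y a / y"
      unfolding d_minus_def using less_cSUP_iff[OF ne bdd] by blast
    have yp: "0 < y" using y assms by auto
    have gy: "d * y < g y a" using y(2) yp by (simp add: field_simps)
    obtain \<xi> where xi: "\<Phi> \<xi> = y" proof -
      have "0 < y" "y < 1" using y(1) assms by auto
      then show ?thesis using conjunct2[OF conjunct2[OF common[OF H(3,4) cnz]]] that by blast
    qed
    obtain D where D: "0 \<le> D" "- c * D = tw_rhs g a d k \<Phi> \<xi>" using conjunct1[OF common[OF H(3,4) cnz]] cpos by auto
    have r: "0 \<le> \<Phi> (\<xi> - 1)" using conjunct1[OF conjunct2[OF common[OF H(3,4) cnz]]] cpos by auto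
    have m: "\<Phi> \<xi> \<le> \<Phi> (\<xi> + 1)" by (rule monoD[OF H(3)]) simp
    have "k * \<Phi> \<xi> \<le> k * \<Phi> (\<xi> + 1)" using m assms(4) by (intro mult_left_mono) auto
    then have "- y \<le> k * \<Phi> (\<xi> + 1) - (k + 1) * \<Phi> \<xi> + \<Phi> (\<xi> - 1)"
    proof -
      have "(k + 1) * \<Phi> \<xi> = k * \<Phi> \<xi> + y" using xi by (simp add: algebra_simps)
      then show ?thesis using r \<open>k * \<Phi> \<xi> \<le> k * \<Phi> (\<xi> + 1)\<close> by linarith
    qed
    then have "d * (- y) \<le> d * (k * \<Phi> (\<xi> + 1) - (k + 1) * \<Phi> \<xi> + \<Phi> (\<xi> - 1))"
      using H(1) by (intro mult_left_mono) auto
    then have "tw_rhs g a d k \<Phi> \<xi> > 0" unfolding tw_rhs_def using gy xi by simp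
    moreover have "- c * D \<le> 0" using cpos D(1) by simp
    ultimately show False using D(2) by simp
  qed
  show ?thesis
  proof (intro conjI allI impI)
    fix d c \<Phi> assume "0 < d \<and> d < d_plus g a k \<and> mono \<Phi> \<and> tw_solution g a d k c \<Phi>"
    then show "c \<ge> 0" using P1 by blast
  next
    fix d c \<Phi> assume "0 < d \<and> d < d_minus g a \<and> mono \<Phi> \<and> tw_solution g a d k c \<Phi>"
    then show "c \<le> 0" using P2 by blast
  next
    fix d c \<Phi> assume A: "0 < d \<and> d < min (d_minus g a) (d_plus g a k) \<and> mono \<Phi> \<and> tw_solution g a d k c \<Phi>"
    then have "d < d_minus g a" "d < d_plus g a k" by auto
    then have "c \<ge> 0" "c \<le> 0" using A P1[of d \<Phi> c] P2[of d \<Phi> c] by auto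
    then show "c = 0" by simp
  qed
qed

end
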